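(* Let $E$ and $F$ be Banach lattices such that the Fremlin tensor product $E\overline{\otimes}F$ is order complete. Let $\mathbf{B}=(B_\alpha)_{\alpha\in I}$ and $\mathbf{C}=(C_\beta)_{\beta\in J}$ be dense band decompositions of $E$ and $F$, respectively. Then the collection $\mathbf{A}=\{B_\alpha\widehat{\otimes}C_\beta:\alpha\in I,\beta\in J\}$ is a dense band decomposition of the Fremlin projective tensor product $E\widehat{\otimes}F$.
   Context: $E\overline{\otimes}F$ is Fremlin's Archimedean vector lattice tensor product (the vector lattice generated by $E\otimes F$ with the universal property for lattice bimorphisms), and $E\widehat{\otimes}F$ is Fremlin's projective tensor product, the Banach lattice completion of $E\overline{\otimes}F$ under the projective norm $\|\cdot\|_{|\pi|}$; $E\overline{\otimes}F$ is a norm dense vector sublattice of $E\widehat{\otimes}F$. For bands $B\subseteq E$, $C\subseteq F$, $B\widehat{\otimes}C$ denotes the norm closure in $E\widehat{\otimes}F$ of the vector sublattice generated by $B\otimes C$ (equivalently, the Fremlin projective tensor product of $B$ and $C$ sitting inside $E\widehat{\otimes}F$). A Banach lattice $G$ has a dense band decomposition if there is a family of pairwise disjoint projection bands of $G$ whose linear span is norm dense in $G$. *)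

theory Defs
  imports "HOL-Analysis.Analysis"
begin

class banach_lattice = banach + lattice + ordered_real_vector +
  assumes norm_lattice_mono: "sup x (- x) \<le> sup y (- y) \<Longrightarrow> norm x \<le> norm y"

definition lat_abs :: "'a::{lattice, ab_group_add} \<Rightarrow> 'a" where
  "lat_abs x = sup x (- x)"

definition is_sup_in :: "'a::order set \<Rightarrow> 'a set \<Rightarrow> 'a \<Rightarrow> bool" where
  "is_sup_in M D s \<longleftrightarrow> s \<in> M \<and> (\<forall>d\<in>D. d \<le> s) \<and> (\<forall>u\<in>M. (\<forall>d\<in>D. d \<le> u) \<longrightarrow> s \<le> u)"

definition lat_disjoint :: "'a::{lattice, ab_group_add} \<Rightarrow> 'a \<Rightarrow> bool" where
  "lat_disjoint x y \<longleftrightarrow> inf (lat_abs x) (lat_abs y) = 0"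

definition disjoint_complement :: "'a::{lattice, ab_group_add} set \<Rightarrow> 'a set" where
  "disjoint_complement B = {x. \<forall>b\<in>B. lat_disjoint x b}"

definition lat_ideal :: "'a::banach_lattice set \<Rightarrow> bool" where
  "lat_ideal B \<longleftrightarrow> subspace B \<and> (\<forall>x\<in>B. \<forall>y. lat_abs y \<le> lat_abs x \<longrightarrow> y \<in> B)"

definition band :: "'a::banach_lattice set \<Rightarrow> bool" where
  "band B \<longleftrightarrow> lat_ideal B \<and> (\<forall>D s. D \<subseteq> B \<and> is_sup_in UNIV D s \<longrightarrow> s \<in> B)"

definition projection_band :: "'a::banach_lattice set \<Rightarrow> bool" where
  "projection_band B \<longleftrightarrow> band B \<and>
     (\<forall>x. \<exists>b\<in>B. \<exists>c\<in>disjoint_complement B. x = b + c)"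

definition dense_band_decomposition :: "('i \<Rightarrow> 'a::banach_lattice set) \<Rightarrow> 'i set \<Rightarrow> bool" where
  "dense_band_decomposition B I \<longleftrightarrow>
     (\<forall>a\<in>I. projection_band (B a)) \<and>
     (\<forall>a\<in>I. \<forall>b\<in>I. a \<noteq> b \<longrightarrow> (\<forall>x\<in>B a. \<forall>y\<in>B b. lat_disjoint x y)) \<and>
     closure (span (\<Union>a\<in>I. B a)) = UNIV"

definition gen_sublattice :: "'a::banach_lattice set \<Rightarrow> 'a set" where
  "gen_sublattice S = \<Inter>{M. subspace M \<and> S \<subseteq> M \<and> (\<forall>a\<in>M. \<forall>b\<in>M. sup a b \<in> M)}"

definition order_complete_on :: "'a::order set \<Rightarrow> bool" where
  "order_complete_on M \<longleftrightarrow>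
     (\<forall>D. D \<subseteq> M \<and> D \<noteq> {} \<and> (\<exists>u\<in>M. \<forall>d\<in>D. d \<le> u) \<longrightarrow> (\<exists>s. is_sup_in M D s))"

record 'u vlat =
  vc :: "'u set"
  vadd :: "'u \<Rightarrow> 'u \<Rightarrow> 'u"
  vsmul :: "real \<Rightarrow> 'u \<Rightarrow> 'u"
  vzero :: 'u
  vle :: "'u \<Rightarrow> 'u \<Rightarrow> bool"

definition vlub :: "'u vlat \<Rightarrow> 'u \<Rightarrow> 'u \<Rightarrow> 'u \<Rightarrow> bool" where
  "vlub H a b s \<longleftrightarrow> s \<in> vc H \<and> vle H a s \<and> vle H b s \<and>
     (\<forall>u\<in>vc H. vle H a u \<and> vle H b u \<longrightarrow> vle H s u)"

definition arch_vector_lattice :: "'u vlat \<Rightarrow> bool" where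
  "arch_vector_lattice H \<longleftrightarrow>
     vzero H \<in> vc H \<and>
     (\<forall>a\<in>vc H. \<forall>b\<in>vc H. vadd H a b \<in> vc H) \<and>
     (\<forall>c. \<forall>a\<in>vc H. vsmul H c a \<in> vc H) \<and>
     (\<forall>a\<in>vc H. \<forall>b\<in>vc H. \<forall>c\<in>vc H. vadd H (vadd H a b) c = vadd H a (vadd H b c)) \<and>
     (\<forall>a\<in>vc H. \<forall>b\<in>vc H. vadd H a b = vadd H b a) \<and>
     (\<forall>a\<in>vc H. vadd H a (vzero H) = a) \<and>
     (\<forall>a\<in>vc H. \<exists>b\<in>vc H. vadd H a b = vzero H) \<and>
     (\<forall>a\<in>vc H. vsmul H 1 a = a) \<and>
     (\<forall>c d. \<forall>a\<in>vc H. vsmul H c (vsmul H d a) = vsmul H (c * d) a) \<and>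
     (\<forall>c d. \<forall>a\<in>vc H. vsmul H (c + d) a = vadd H (vsmul H c a) (vsmul H d a)) \<and>
     (\<forall>c. \<forall>a\<in>vc H. \<forall>b\<in>vc H. vsmul H c (vadd H a b) = vadd H (vsmul H c a) (vsmul H c b)) \<and>
     (\<forall>a\<in>vc H. vle H a a) \<and>
     (\<forall>a\<in>vc H. \<forall>b\<in>vc H. vle H a b \<and> vle H b a \<longrightarrow> a = b) \<and>
     (\<forall>a\<in>vc H. \<forall>b\<in>vc H. \<forall>c\<in>vc H. vle H a b \<and> vle H b c \<longrightarrow> vle H a c) \<and>
     (\<forall>a\<in>vc H. \<forall>b\<in>vc H. \<forall>c\<in>vc H. vle H a b \<longrightarrow> vle H (vadd H a c) (vadd H b c)) \<and>
     (\<forall>c::real. \<forall>a\<in>vc H. 0 \<le> c \<and> vle H (vzero H) a \<longrightarrow> vle H (vzero H) (vsmul H c a)) \<and>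
     (\<forall>a\<in>vc H. \<forall>b\<in>vc H. \<exists>s. vlub H a b s) \<and>
     (\<forall>a\<in>vc H. \<forall>b\<in>vc H. vle H (vzero H) a \<and> (\<forall>n::nat. vle H (vsmul H (real n) a) b)
        \<longrightarrow> a = vzero H)"

definition vl_hom_on :: "'a::banach_lattice set \<Rightarrow> 'u vlat \<Rightarrow> ('a \<Rightarrow> 'u) \<Rightarrow> bool" where
  "vl_hom_on L H T \<longleftrightarrow>
     (\<forall>a\<in>L. T a \<in> vc H) \<and>
     (\<forall>a\<in>L. \<forall>b\<in>L. T (a + b) = vadd H (T a) (T b)) \<and>
     (\<forall>c. \<forall>a\<in>L. T (c *\<^sub>R a) = vsmul H c (T a)) \<and>
     (\<forall>a\<in>L. \<forall>b\<in>L. vlub H (T a) (T b) (T (sup a b)))"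

definition vl_bimorphism ::
  "'u vlat \<Rightarrow> ('e::banach_lattice \<Rightarrow> 'f::banach_lattice \<Rightarrow> 'u) \<Rightarrow> bool" where
  "vl_bimorphism H \<phi> \<longleftrightarrow>
     (\<forall>x y. \<phi> x y \<in> vc H) \<and>
     (\<forall>x1 x2 y. \<phi> (x1 + x2) y = vadd H (\<phi> x1 y) (\<phi> x2 y)) \<and>
     (\<forall>x y1 y2. \<phi> x (y1 + y2) = vadd H (\<phi> x y1) (\<phi> x y2)) \<and>
     (\<forall>c x y. \<phi> (c *\<^sub>R x) y = vsmul H c (\<phi> x y)) \<and>
     (\<forall>c x y. \<phi> x (c *\<^sub>R y) = vsmul H c (\<phi> x y)) \<and>
     (\<forall>x y1 y2. 0 \<le> x \<longrightarrow> vlub H (\<phi> x y1) (\<phi> x y2) (\<phi> x (sup y1 y2))) \<and>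
     (\<forall>x1 x2 y. 0 \<le> y \<longrightarrow> vlub H (\<phi> x1 y) (\<phi> x2 y) (\<phi> (sup x1 x2) y))"

definition lattice_bimorphism ::
  "('e::banach_lattice \<Rightarrow> 'f::banach_lattice \<Rightarrow> 'g::banach_lattice) \<Rightarrow> bool" where
  "lattice_bimorphism t \<longleftrightarrow> bilinear t \<and>
     (\<forall>x y1 y2. 0 \<le> x \<longrightarrow> t x (sup y1 y2) = sup (t x y1) (t x y2)) \<and>
     (\<forall>x1 x2 y. 0 \<le> y \<longrightarrow> t (sup x1 x2) y = sup (t x1 y) (t x2 y))"

text \<open>The vector sublattice of G generated by E \<otimes> F (the candidate for E \<otimes>bar F).\<close>
definition fremlin_lattice :: "('e \<Rightarrow> 'f \<Rightarrow> 'g::banach_lattice) \<Rightarrow> 'g set" where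
  "fremlin_lattice t = gen_sublattice (range (case_prod t))"

text \<open>Fremlin's universal property: (fremlin_lattice t, t) is the Archimedean vector lattice
tensor product of E and F.  The target vector lattices are taken with carrier inside the type
('e \<times> 'f) + real, which is large enough: the sublattice generated by the image of a bimorphism
has cardinality at most that of this type.\<close>
definition fremlin_tensor ::
  "('e::banach_lattice \<Rightarrow> 'f::banach_lattice \<Rightarrow> 'g::banach_lattice) \<Rightarrow> bool" where
  "fremlin_tensor t \<longleftrightarrow> lattice_bimorphism t \<and>
     (\<forall>(H :: (('e \<times> 'f) + real) vlat) \<phi>. arch_vector_lattice H \<and> vl_bimorphism H \<phi> \<longrightarrow>
        (\<exists>T. vl_hom_on (fremlin_lattice t) H T \<and> (\<forall>x y. T (t x y) = \<phi> x y) \<and>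
           (\<forall>T'. vl_hom_on (fremlin_lattice t) H T' \<and> (\<forall>x y. T' (t x y) = \<phi> x y) \<longrightarrow>
                (\<forall>u\<in>fremlin_lattice t. T' u = T u))))"

definition proj_norm :: "('e::banach_lattice \<Rightarrow> 'f::banach_lattice \<Rightarrow> 'g::banach_lattice) \<Rightarrow> 'g \<Rightarrow> real" where
  "proj_norm t u = Inf {r. \<exists>n x y. (\<forall>i<n. 0 \<le> x i \<and> 0 \<le> y i) \<and>
        lat_abs u \<le> (\<Sum>i<(n::nat). t (x i) (y i)) \<and> r = (\<Sum>i<n. norm (x i) * norm (y i))}"

text \<open>G (with t) is Fremlin's projective tensor product E \<otimes>hat F: the Fremlin tensor product
E \<otimes>bar F sits in G as a norm dense vector sublattice and the norm of G restricted to it is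
the projective norm, i.e. G is the completion of (E \<otimes>bar F, projective norm).\<close>
definition fremlin_projective_tensor ::
  "('e::banach_lattice \<Rightarrow> 'f::banach_lattice \<Rightarrow> 'g::banach_lattice) \<Rightarrow> bool" where
  "fremlin_projective_tensor t \<longleftrightarrow> fremlin_tensor t \<and>
     (\<forall>u\<in>fremlin_lattice t. norm u = proj_norm t u) \<and>
     closure (fremlin_lattice t) = UNIV"

text \<open>B \<otimes>hat C for B \<subseteq> E, C \<subseteq> F: the norm closure in G of the vector sublattice generated
by B \<otimes> C.\<close>
definition proj_tensor_sub ::
  "('e \<Rightarrow> 'f \<Rightarrow> 'g::banach_lattice) \<Rightarrow> 'e set \<Rightarrow> 'f set \<Rightarrow> 'g set" where
  "proj_tensor_sub t B C = closure (gen_sublattice (case_prod t ` (B \<times> C)))"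

end

theory Submission
  imports Defs "HOL-Library.Lattice_Algebras"
begin

subclass (in banach_lattice) lattice_ab_group_add ..

interpretation bl: lattice_ab_group_add_abs lat_abs "(+)" "0::'a::banach_lattice" "(-)" uminus "(\<le>)" "(<)" inf sup
  by unfold_locales (simp add: lat_abs_def)

lemma abs_nonneg: "0 \<le> lat_abs (x::'a::banach_lattice)" by (rule bl.abs_ge_zero)
lemma abs_idem: "lat_abs (lat_abs x) = lat_abs (x::'a::banach_lattice)" by (rule bl.abs_idempotent)
lemma abs_of_nonneg': "0 \<le> x \<Longrightarrow> lat_abs x = (x::'a::banach_lattice)" by (rule bl.abs_of_nonneg)
lemma abs_zero_iff: "lat_abs x = 0 \<longleftrightarrow> x = (0::'a::banach_lattice)" by (rule bl.abs_eq_0)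
lemma abs_minus': "lat_abs (- x) = lat_abs (x::'a::banach_lattice)" by (rule bl.abs_minus_cancel)
lemma abs_ge_self': "x \<le> lat_abs (x::'a::banach_lattice)" by (rule bl.abs_ge_self)
lemma abs_ge_minus': "- x \<le> lat_abs (x::'a::banach_lattice)" by (rule bl.abs_ge_minus_self)
lemma abs_tri: "lat_abs (x + y) \<le> lat_abs x + lat_abs (y::'a::banach_lattice)" by (rule bl.abs_triangle_ineq)
lemma abs_leI': "x \<le> b \<Longrightarrow> - x \<le> b \<Longrightarrow> lat_abs x \<le> (b::'a::banach_lattice)" by (rule bl.abs_leI)
lemma abs_commute': "lat_abs (x - y) = lat_abs (y - (x::'a::banach_lattice))" by (rule bl.abs_minus_commute)

lemma norm_abs_mono: "lat_abs x \<le> lat_abs y \<Longrightarrow> norm (x::'a::banach_lattice) \<le> norm y"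
  using norm_lattice_mono unfolding lat_abs_def by blast

lemma norm_lat_abs: "norm (lat_abs x) = norm (x::'a::banach_lattice)"
  by (metis abs_idem norm_abs_mono order_refl antisym)

lemma norm_mono_pos: "0 \<le> x \<Longrightarrow> x \<le> y \<Longrightarrow> norm x \<le> norm (y::'a::banach_lattice)"
  by (rule norm_abs_mono) (metis abs_of_nonneg' order_trans)

lemma inf_add_le:
  fixes a b c :: "'a::banach_lattice"
  assumes "0 \<le> a" "0 \<le> b" "0 \<le> c"
  shows "inf (a + b) c \<le> inf a c + inf b c"
proof -
  have eq: "inf a c + inf b c = inf (inf (a + b) (a + c)) (inf (c + b) (c + c))"
    by (simp add: add_inf_distrib_left add_inf_distrib_right inf_aci)
  have "inf (a + b) c \<le> a + c" using assms by (meson add_increasing inf_le2 order_trans)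
  moreover have "inf (a + b) c \<le> c + b" using assms by (meson add_increasing2 inf_le2 order_trans)
  moreover have "inf (a + b) c \<le> c + c" using assms by (meson add_increasing inf_le2 order_trans)
  ultimately show ?thesis unfolding eq by (simp add: le_infI1 le_infI2)
qed

lemma inf_nonneg: "0 \<le> a \<Longrightarrow> 0 \<le> b \<Longrightarrow> 0 \<le> inf a (b::'a::banach_lattice)"
  by simp

lemma disj_mono:
  fixes x y p q :: "'a::banach_lattice"
  assumes "lat_abs x \<le> p" "lat_abs y \<le> q" "inf p q = 0"
  shows "lat_disjoint x y"
proof -
  have "inf (lat_abs x) (lat_abs y) \<le> inf p q" using assms by (meson inf_mono)
  moreover have "0 \<le> inf (lat_abs x) (lat_abs y)" by (simp add: abs_nonneg)
  ultimately show ?thesis unfolding lat_disjoint_def using assms by simp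
qed

lemma lat_disjoint_sym: "lat_disjoint x y \<longleftrightarrow> lat_disjoint y x"
  unfolding lat_disjoint_def by (simp add: inf_commute)

lemma scaleR_sup:
  fixes x y :: "'a::banach_lattice"
  assumes "0 \<le> c"
  shows "c *\<^sub>R sup x y = sup (c *\<^sub>R x) (c *\<^sub>R y)"
proof (cases "c = 0")
  case True then show ?thesis by simp
next
  case False
  then have cp: "0 < c" using assms by simp
  have 1: "sup (c *\<^sub>R x) (c *\<^sub>R y) \<le> c *\<^sub>R sup x y"
    using assms by (simp add: scaleR_left_mono)
  have "x \<le> (1/c) *\<^sub>R sup (c *\<^sub>R x) (c *\<^sub>R y)"
  proof -
    have "(1/c) *\<^sub>R (c *\<^sub>R x) \<le> (1/c) *\<^sub>R sup (c *\<^sub>R x) (c *\<^sub>R y)"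
      using cp by (intro scaleR_left_mono) auto
    then show ?thesis using cp by simp
  qed
  moreover have "y \<le> (1/c) *\<^sub>R sup (c *\<^sub>R x) (c *\<^sub>R y)"
  proof -
    have "(1/c) *\<^sub>R (c *\<^sub>R y) \<le> (1/c) *\<^sub>R sup (c *\<^sub>R x) (c *\<^sub>R y)"
      using cp by (intro scaleR_left_mono) auto
    then show ?thesis using cp by simp
  qed
  ultimately have "sup x y \<le> (1/c) *\<^sub>R sup (c *\<^sub>R x) (c *\<^sub>R y)" by simp
  then have "c *\<^sub>R sup x y \<le> c *\<^sub>R ((1/c) *\<^sub>R sup (c *\<^sub>R x) (c *\<^sub>R y))"
    using assms by (rule scaleR_left_mono)
  then have "c *\<^sub>R sup x y \<le> sup (c *\<^sub>R x) (c *\<^sub>R y)" using cp by simp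
  from antisym[OF this 1] show ?thesis .
qed

lemma abs_scaleR': "lat_abs (c *\<^sub>R x) = \<bar>c\<bar> *\<^sub>R lat_abs (x::'a::banach_lattice)"
proof (cases "0 \<le> c")
  case True
  then show ?thesis unfolding lat_abs_def using scaleR_sup[OF True, of x "-x"] by simp
next
  case False
  then have "c *\<^sub>R x = \<bar>c\<bar> *\<^sub>R (- x)" by simp
  then show ?thesis unfolding lat_abs_def using scaleR_sup[of "\<bar>c\<bar>" "-x" x] by (simp add: sup_commute)
qed



lemma sup_diff_bound:
  fixes a b c d :: "'a::banach_lattice"
  shows "lat_abs (sup a b - sup c d) \<le> lat_abs (a - c) + lat_abs (b - d)"
proof -
  have g: "\<And>a b c d :: 'a. sup a b - sup c d \<le> lat_abs (a - c) + lat_abs (b - d)"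
  proof -
    fix a b c d :: 'a
    let ?e = "lat_abs (a - c) + lat_abs (b - d)"
    have "a - c \<le> ?e" by (meson abs_ge_self' abs_nonneg add_increasing2)
    then have "a \<le> c + ?e" by (simp add: algebra_simps)
    also have "\<dots> \<le> sup c d + ?e" by simp
    finally have 1: "a \<le> sup c d + ?e" .
    have "b - d \<le> ?e" by (meson abs_ge_self' abs_nonneg add_increasing)
    then have "b \<le> d + ?e" by (simp add: algebra_simps)
    also have "\<dots> \<le> sup c d + ?e" by simp
    finally have 2: "b \<le> sup c d + ?e" .
    from 1 2 have "sup a b \<le> sup c d + ?e" by simp
    then show "sup a b - sup c d \<le> ?e" by (metis diff_le_eq add.commute)
  qed
  show ?thesis
  proof (rule abs_leI')
    show "sup a b - sup c d \<le> lat_abs (a - c) + lat_abs (b - d)" by (rule g)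
    have "sup c d - sup a b \<le> lat_abs (c - a) + lat_abs (d - b)" by (rule g)
    then show "- (sup a b - sup c d) \<le> lat_abs (a - c) + lat_abs (b - d)"
      by (metis minus_diff_eq abs_commute')
  qed
qed

lemma norm_sup_diff:
  fixes a b c d :: "'a::banach_lattice"
  shows "norm (sup a b - sup c d) \<le> norm (a - c) + norm (b - d)"
proof -
  have "lat_abs (lat_abs (a - c) + lat_abs (b - d)) = lat_abs (a - c) + lat_abs (b - d)"
    by (intro abs_of_nonneg' add_nonneg_nonneg abs_nonneg)
  then have "lat_abs (sup a b - sup c d) \<le> lat_abs (lat_abs (a - c) + lat_abs (b - d))"
    using sup_diff_bound by simp
  then have "norm (sup a b - sup c d) \<le> norm (lat_abs (a - c) + lat_abs (b - d))"
    by (rule norm_abs_mono)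
  also have "\<dots> \<le> norm (lat_abs (a - c)) + norm (lat_abs (b - d))" by (rule norm_triangle_ineq)
  finally show ?thesis by (simp add: norm_lat_abs)
qed

lemma tendsto_lat_sup:
  fixes l m :: "'a::banach_lattice"
  assumes "(f \<longlongrightarrow> l) F" "(g \<longlongrightarrow> m) F"
  shows "((\<lambda>x. sup (f x) (g x)) \<longlongrightarrow> sup l m) F"
proof -
  have h: "((\<lambda>x. norm (f x - l) + norm (g x - m)) \<longlongrightarrow> 0) F"
    using assms by (intro tendsto_add_zero tendsto_norm_zero LIM_zero)
  have "((\<lambda>x. sup (f x) (g x) - sup l m) \<longlongrightarrow> 0) F"
    by (rule Lim_null_comparison[OF always_eventually h]) (intro allI norm_sup_diff)
  then show ?thesis by (rule LIM_zero_cancel)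
qed

lemma tendsto_lat_inf:
  fixes l m :: "'a::banach_lattice"
  assumes "(f \<longlongrightarrow> l) F" "(g \<longlongrightarrow> m) F"
  shows "((\<lambda>x. inf (f x) (g x)) \<longlongrightarrow> inf l m) F"
proof -
  have "((\<lambda>x. - sup (- f x) (- g x)) \<longlongrightarrow> - sup (- l) (- m)) F"
    using assms by (intro tendsto_minus tendsto_lat_sup)
  moreover have e1: "(\<lambda>x. inf (f x) (g x)) = (\<lambda>x. - sup (- f x) (- g x))"
    by (simp only: inf_eq_neg_sup)
  moreover have e2: "inf l m = - sup (- l) (- m)" by (simp only: inf_eq_neg_sup)
  ultimately show ?thesis by (simp only:)
qed

lemma tendsto_lat_abs:
  fixes l :: "'a::banach_lattice"
  assumes "(f \<longlongrightarrow> l) F"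
  shows "((\<lambda>x. lat_abs (f x)) \<longlongrightarrow> lat_abs l) F"
  unfolding lat_abs_def using assms by (intro tendsto_lat_sup tendsto_minus)

lemma cont_inf_abs: "continuous_on UNIV (\<lambda>x. inf (lat_abs x) (c::'a::banach_lattice))"
  unfolding continuous_on_def
  by (auto intro!: tendsto_lat_inf tendsto_lat_abs tendsto_ident_at)

definition sublat :: "'a::banach_lattice set \<Rightarrow> bool" where
  "sublat M \<longleftrightarrow> subspace M \<and> (\<forall>a\<in>M. \<forall>b\<in>M. sup a b \<in> M)"

lemma gen_sublattice_least: "sublat M \<Longrightarrow> S \<subseteq> M \<Longrightarrow> gen_sublattice S \<subseteq> M"
  unfolding gen_sublattice_def sublat_def by blast

lemma gen_sublattice_sublat: "sublat (gen_sublattice S)"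
  unfolding gen_sublattice_def sublat_def
  by (auto intro!: subspace_Inter)

lemma gen_sublattice_sup: "S \<subseteq> gen_sublattice S"
  unfolding gen_sublattice_def by blast

lemma closure_subspace':
  fixes M :: "'a::real_normed_vector set"
  assumes "subspace M" shows "subspace (closure M)"
  unfolding subspace_def
proof (intro conjI ballI allI)
  show "0 \<in> closure M" using assms closure_subset subspace_0 by blast
next
  fix x y assume "x \<in> closure M" "y \<in> closure M"
  then obtain u v where u: "\<forall>n. u n \<in> M" "u \<longlonglongrightarrow> x" and v: "\<forall>n. v n \<in> M" "v \<longlonglongrightarrow> y"
    unfolding closure_sequential by blast
  have "\<forall>n. u n + v n \<in> M" using u v assms subspace_add by blast
  moreover have "(\<lambda>n. u n + v n) \<longlonglongrightarrow> x + y" using u v by (intro tendsto_add)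
  ultimately show "x + y \<in> closure M" unfolding closure_sequential by (intro exI[where x="\<lambda>n. u n + v n"]) blast
next
  fix c x assume "x \<in> closure M"
  then obtain u where u: "\<forall>n. u n \<in> M" "u \<longlonglongrightarrow> x"
    unfolding closure_sequential by blast
  have "\<forall>n. c *\<^sub>R u n \<in> M" using u assms subspace_scale by blast
  moreover have "(\<lambda>n. c *\<^sub>R u n) \<longlonglongrightarrow> c *\<^sub>R x" using u by (intro tendsto_scaleR tendsto_const)
  ultimately show "c *\<^sub>R x \<in> closure M" unfolding closure_sequential by (intro exI[where x="\<lambda>n. c *\<^sub>R u n"]) blast
qed

lemma closure_sublat: assumes "sublat M" shows "sublat (closure M)"
  unfolding sublat_def
proof (intro conjI ballI)
  show "subspace (closure M)" using assms closure_subspace' sublat_def by blast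
next
  fix x y assume "x \<in> closure M" "y \<in> closure M"
  then obtain u v where u: "\<forall>n. u n \<in> M" "u \<longlonglongrightarrow> x" and v: "\<forall>n. v n \<in> M" "v \<longlonglongrightarrow> y"
    unfolding closure_sequential by blast
  have "\<forall>n. sup (u n) (v n) \<in> M" using u v assms unfolding sublat_def by blast
  moreover have "(\<lambda>n. sup (u n) (v n)) \<longlonglongrightarrow> sup x y" using u v by (intro tendsto_lat_sup)
  ultimately show "sup x y \<in> closure M" unfolding closure_sequential by (intro exI[where x="\<lambda>n. sup (u n) (v n)"]) blast
qed

section \<open>Disjoint complements\<close>

lemma dc_iff: "x \<in> disjoint_complement S \<longleftrightarrow> (\<forall>s\<in>S. lat_disjoint x s)"
  unfolding disjoint_complement_def by simp

lemma dc_solid: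
  fixes x y :: "'a::banach_lattice"
  assumes "x \<in> disjoint_complement S" "lat_abs y \<le> lat_abs x"
  shows "y \<in> disjoint_complement S"
  unfolding dc_iff
proof
  fix s assume "s \<in> S"
  then have "inf (lat_abs x) (lat_abs s) = 0" using assms dc_iff lat_disjoint_def by blast
  then show "lat_disjoint y s" using assms(2) by (intro disj_mono[of _ "lat_abs x" _ "lat_abs s"]) auto
qed

lemma dc_zero: "(0::'a::banach_lattice) \<in> disjoint_complement S"
  unfolding dc_iff lat_disjoint_def by (simp add: abs_nonneg lat_abs_def[of 0, symmetric] inf_absorb1)

lemma dc_add:
  fixes x y :: "'a::banach_lattice"
  assumes "x \<in> disjoint_complement S" "y \<in> disjoint_complement S"
  shows "x + y \<in> disjoint_complement S"
  unfolding dc_iff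
proof
  fix s assume "s \<in> S"
  then have 1: "inf (lat_abs x) (lat_abs s) = 0" "inf (lat_abs y) (lat_abs s) = 0"
    using assms dc_iff lat_disjoint_def by blast+
  have "inf (lat_abs x + lat_abs y) (lat_abs s) \<le> 0"
    using inf_add_le[of "lat_abs x" "lat_abs y" "lat_abs s"] 1 by (simp add: abs_nonneg)
  moreover have "0 \<le> inf (lat_abs x + lat_abs y) (lat_abs s)" by (simp add: abs_nonneg)
  ultimately have "inf (lat_abs x + lat_abs y) (lat_abs s) = 0" by simp
  then show "lat_disjoint (x + y) s"
    by (intro disj_mono[of _ "lat_abs x + lat_abs y" _ "lat_abs s"]) (auto simp: abs_tri)
qed

lemma dc_abs:
  fixes x :: "'a::banach_lattice"
  shows "x \<in> disjoint_complement S \<Longrightarrow> lat_abs x \<in> disjoint_complement S"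
  by (erule dc_solid) (simp add: abs_idem)

lemma dc_nat_scale:
  fixes x :: "'a::banach_lattice"
  shows "x \<in> disjoint_complement S \<Longrightarrow> real n *\<^sub>R x \<in> disjoint_complement S"
proof (induction n)
  case 0 then show ?case by (simp add: dc_zero)
next
  case (Suc n)
  then have "x + real n *\<^sub>R x \<in> disjoint_complement S" by (intro dc_add)
  then show ?case by (simp add: algebra_simps)
qed

lemma dc_scale:
  fixes x :: "'a::banach_lattice"
  assumes "x \<in> disjoint_complement S"
  shows "c *\<^sub>R x \<in> disjoint_complement S"
proof -
  obtain n :: nat where n: "\<bar>c\<bar> \<le> real n" using real_arch_simple by blast
  have "lat_abs (c *\<^sub>R x) = \<bar>c\<bar> *\<^sub>R lat_abs x" by (rule abs_scaleR')
  also have "\<dots> \<le> real n *\<^sub>R lat_abs x" using n by (intro scaleR_right_mono abs_nonneg)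
  also have "\<dots> = lat_abs (real n *\<^sub>R lat_abs x)" by (simp add: abs_scaleR' abs_idem)
  finally show ?thesis using dc_nat_scale[OF dc_abs[OF assms]] dc_solid by blast
qed

lemma dc_subspace: "subspace (disjoint_complement (S::'a::banach_lattice set))"
  unfolding subspace_def by (auto intro: dc_zero dc_add dc_scale)

lemma abs_sup_le: "lat_abs (sup x y) \<le> lat_abs x + lat_abs (y::'a::banach_lattice)"
proof (rule abs_leI')
  have "x \<le> lat_abs x + lat_abs y" by (meson abs_ge_self' abs_nonneg add_increasing2)
  moreover have "y \<le> lat_abs x + lat_abs y" by (meson abs_ge_self' abs_nonneg add_increasing)
  ultimately show "sup x y \<le> lat_abs x + lat_abs y" by simp
  have "- sup x y \<le> - x" by simp
  also have "\<dots> \<le> lat_abs x + lat_abs y" by (meson abs_ge_minus' abs_nonneg add_increasing2)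
  finally show "- sup x y \<le> lat_abs x + lat_abs y" .
qed

lemma dc_sup:
  fixes x y :: "'a::banach_lattice"
  assumes "x \<in> disjoint_complement S" "y \<in> disjoint_complement S"
  shows "sup x y \<in> disjoint_complement S"
proof -
  have "lat_abs x + lat_abs y \<in> disjoint_complement S" using assms by (intro dc_add dc_abs)
  moreover have "lat_abs (sup x y) \<le> lat_abs (lat_abs x + lat_abs y)"
    using abs_sup_le by (metis abs_nonneg abs_of_nonneg' add_nonneg_nonneg)
  ultimately show ?thesis using dc_solid by blast
qed

lemma dc_sublat: "sublat (disjoint_complement (S::'a::banach_lattice set))"
  unfolding sublat_def by (auto intro: dc_subspace dc_sup)

lemma dc_closed: "closed (disjoint_complement (S::'a::banach_lattice set))"
proof -
  have "disjoint_complement S = (\<Inter>s\<in>S. {x. inf (lat_abs x) (lat_abs s) = 0})"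
    unfolding disjoint_complement_def lat_disjoint_def by auto
  moreover have "closed {x. inf (lat_abs x) (lat_abs s) = 0}" for s :: 'a
    by (intro closed_Collect_eq cont_inf_abs continuous_on_const)
  ultimately show ?thesis by auto
qed

lemma dc_closure_gen:
  fixes T :: "'a::banach_lattice set"
  assumes "T \<subseteq> disjoint_complement S"
  shows "closure (gen_sublattice T) \<subseteq> disjoint_complement S"
proof -
  have "gen_sublattice T \<subseteq> disjoint_complement S"
    using assms by (intro gen_sublattice_least dc_sublat)
  then show ?thesis using dc_closed closure_minimal by blast
qed

lemma dc_swap: "z \<in> disjoint_complement T \<longleftrightarrow> T \<subseteq> disjoint_complement {z}"
  by (simp add: dc_iff subset_iff) (metis lat_disjoint_sym)

lemma dc_of_closure_gen:
  fixes T :: "'a::banach_lattice set"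
  assumes "z \<in> disjoint_complement T"
  shows "z \<in> disjoint_complement (closure (gen_sublattice T))"
  using assms dc_swap dc_closure_gen by metis



lemma zero_inf:
  fixes x y p q :: "'a::banach_lattice"
  assumes "0 \<le> x" "0 \<le> y" "x \<le> p" "y \<le> q" "inf p q = 0"
  shows "inf x y = 0"
proof -
  have "inf x y \<le> inf p q" using assms by (meson inf_mono)
  moreover have "0 \<le> inf x y" using assms by simp
  ultimately show ?thesis using assms(5) by simp
qed

lemma pprt_le_abs: "pprt a \<le> lat_abs (a::'a::banach_lattice)"
  unfolding pprt_def by (simp add: abs_ge_self' abs_nonneg)

lemma nprt_le_abs: "- nprt a \<le> lat_abs (a::'a::banach_lattice)"
  unfolding nprt_def by (simp add: neg_inf_eq_sup abs_ge_minus' abs_nonneg)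

lemma nprt_nonneg: "0 \<le> - nprt (a::'a::banach_lattice)"
  by simp

lemma abs_prts': "lat_abs a = pprt a - nprt (a::'a::banach_lattice)"
proof -
  have "0 \<le> sup a (- a)" using abs_nonneg[of a] unfolding lat_abs_def .
  then have "sup (sup a (- a)) 0 = sup a (- a)" by (rule sup_absorb1)
  then show ?thesis
    by (simp add: add_sup_inf_distribs ac_simps pprt_def nprt_def lat_abs_def)
qed

lemma pprt_nprt_disj: "inf (pprt a) (- nprt a) = (0::'a::banach_lattice)"
proof -
  have s: "pprt a + (- nprt a) = lat_abs a" by (metis abs_prts' diff_conv_add_uminus)
  have "sup (pprt a) (- nprt a) = sup (sup a (- a)) 0"
    unfolding pprt_def nprt_def neg_inf_eq_sup by (simp add: sup_aci)
  also have "\<dots> = lat_abs a" using abs_nonneg[of a] unfolding lat_abs_def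
    by (simp add: sup_absorb1)
  finally have "sup (pprt a) (- nprt a) = lat_abs a" .
  with s add_eq_inf_sup[of "pprt a" "- nprt a"] show ?thesis by simp
qed

lemma pprt_diff_disj:
  fixes X Y :: "'a::banach_lattice"
  assumes "0 \<le> X" "0 \<le> Y" "inf X Y = 0"
  shows "pprt (X - Y) = X"
proof -
  have "sup X Y = X + Y" using add_eq_inf_sup[of X Y] assms by simp
  moreover have "sup X Y + (- Y) = sup (X + - Y) (Y + - Y)" by (rule add_sup_distrib_right)
  ultimately show ?thesis unfolding pprt_def by simp
qed

lemma disj_parts:
  fixes a d :: "'a::banach_lattice"
  assumes "lat_disjoint a d"
  shows "inf (pprt a + pprt d) (- nprt a + - nprt d) = 0"
proof -
  let ?p = "pprt a" and ?q = "- nprt a" and ?r = "pprt d" and ?s = "- nprt d"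
  have ad: "inf (lat_abs a) (lat_abs d) = 0" "inf (lat_abs d) (lat_abs a) = 0"
    using assms unfolding lat_disjoint_def by (simp_all add: inf_commute)
  have pq: "inf ?q ?p = 0" using pprt_nprt_disj by (simp add: inf_commute)
  have rs: "inf ?s ?r = 0" using pprt_nprt_disj by (simp add: inf_commute)
  have sp: "inf ?s ?p = 0" by (rule zero_inf[OF _ _ nprt_le_abs pprt_le_abs ad(2)]) simp_all
  have qr: "inf ?q ?r = 0" by (rule zero_inf[OF _ _ nprt_le_abs pprt_le_abs ad(1)]) simp_all
  have 1: "inf ?p (?q + ?s) = 0"
  proof -
    have "inf (?q + ?s) ?p \<le> inf ?q ?p + inf ?s ?p" by (intro inf_add_le add_nonneg_nonneg nprt_nonneg zero_le_pprt)
    then have "inf ?p (?q + ?s) \<le> 0" using pq sp by (simp add: inf_commute)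
    moreover have "0 \<le> inf ?p (?q + ?s)" by (intro inf_nonneg add_nonneg_nonneg nprt_nonneg zero_le_pprt)
    ultimately show ?thesis by (rule antisym)
  qed
  have 2: "inf ?r (?q + ?s) = 0"
  proof -
    have "inf (?q + ?s) ?r \<le> inf ?q ?r + inf ?s ?r" by (intro inf_add_le add_nonneg_nonneg nprt_nonneg zero_le_pprt)
    then have "inf ?r (?q + ?s) \<le> 0" using qr rs by (simp add: inf_commute)
    moreover have "0 \<le> inf ?r (?q + ?s)" by (intro inf_nonneg add_nonneg_nonneg nprt_nonneg zero_le_pprt)
    ultimately show ?thesis by (rule antisym)
  qed
  have "inf (?p + ?r) (?q + ?s) \<le> inf ?p (?q + ?s) + inf ?r (?q + ?s)"
    by (intro inf_add_le add_nonneg_nonneg nprt_nonneg zero_le_pprt)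
  then have "inf (?p + ?r) (?q + ?s) \<le> 0" using 1 2 by simp
  moreover have "0 \<le> inf (?p + ?r) (?q + ?s)" by (intro inf_nonneg add_nonneg_nonneg nprt_nonneg zero_le_pprt)
  ultimately show ?thesis by (rule antisym)
qed

lemma disj_pprt:
  fixes a d :: "'a::banach_lattice"
  assumes "lat_disjoint a d"
  shows "pprt (a + d) = pprt a + pprt d"
proof -
  have e: "pprt a + nprt a = a" "pprt d + nprt d = d" using prts by metis+
  have "a + d = (pprt a + nprt a) + (pprt d + nprt d)" by (simp only: e)
  also have "\<dots> = (pprt a + pprt d) - (- nprt a + - nprt d)" by (simp add: algebra_simps)
  finally have "a + d = (pprt a + pprt d) - (- nprt a + - nprt d)" .
  moreover have "pprt ((pprt a + pprt d) - (- nprt a + - nprt d)) = pprt a + pprt d"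
    by (intro pprt_diff_disj disj_parts assms add_nonneg_nonneg nprt_nonneg zero_le_pprt)
  ultimately show ?thesis by simp
qed

lemma disj_neg: "lat_disjoint a d \<Longrightarrow> lat_disjoint (- a) (- (d::'a::banach_lattice))"
  unfolding lat_disjoint_def by (simp add: abs_minus')

lemma disj_abs:
  fixes a d :: "'a::banach_lattice"
  assumes "lat_disjoint a d"
  shows "lat_abs (a + d) = lat_abs a + lat_abs d"
proof -
  have "lat_abs (a + d) = pprt (a + d) + pprt (- a + - d)"
    using abs_prts'[of "a + d"] pprt_neg[of "a + d"] by (simp add: algebra_simps)
  also have "\<dots> = pprt a + pprt d + (pprt (- a) + pprt (- d))"
    using disj_pprt[OF assms] disj_pprt[OF disj_neg[OF assms]] by simp
  also have "\<dots> = lat_abs a + lat_abs d"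
    using abs_prts'[of a] abs_prts'[of d] pprt_neg[of a] pprt_neg[of d] by (simp add: algebra_simps)
  finally show ?thesis .
qed

lemma disj_pos:
  fixes a d :: "'a::banach_lattice"
  assumes "lat_disjoint a d" "0 \<le> a + d"
  shows "0 \<le> a" "0 \<le> d"
proof -
  have "a + d = lat_abs a + lat_abs d" using disj_abs[OF assms(1)] abs_of_nonneg'[OF assms(2)] by simp
  then have "(lat_abs a - a) + (lat_abs d - d) = 0" by (simp add: algebra_simps)
  moreover have "0 \<le> lat_abs a - a" "0 \<le> lat_abs d - d" by (simp_all add: abs_ge_self')
  ultimately have "lat_abs a - a = 0" "lat_abs d - d = 0" using add_nonneg_eq_0_iff by blast+
  then show "0 \<le> a" "0 \<le> d" by (metis abs_nonneg eq_iff_diff_eq_0)+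
qed



context
  fixes t :: "'e::banach_lattice \<Rightarrow> 'f::banach_lattice \<Rightarrow> 'g::banach_lattice"
  assumes lb: "lattice_bimorphism t"
begin

lemma lb_bil: "bilinear t" using lb unfolding lattice_bimorphism_def by blast

lemma lb_supr: "0 \<le> x \<Longrightarrow> t x (sup y1 y2) = sup (t x y1) (t x y2)"
  using lb unfolding lattice_bimorphism_def by blast

lemma lb_supl: "0 \<le> y \<Longrightarrow> t (sup x1 x2) y = sup (t x1 y) (t x2 y)"
  using lb unfolding lattice_bimorphism_def by blast

lemma lb_pos: assumes "0 \<le> x" "0 \<le> y" shows "0 \<le> t x y"
proof -
  have "t x y = t x (sup y 0)" using assms by (simp add: sup_absorb1)
  also have "\<dots> = sup (t x y) (t x 0)" using assms(1) by (rule lb_supr)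
  also have "\<dots> = sup (t x y) 0" using bilinear_rzero[OF lb_bil] by simp
  finally have "t x y = sup (t x y) 0" .
  then show ?thesis by (metis sup.cobounded2)
qed

lemma lb_infl: assumes "0 \<le> y" shows "t (inf x1 x2) y = inf (t x1 y) (t x2 y)"
proof -
  have ie: "inf x1 x2 = x1 + x2 - sup x1 x2" using add_eq_inf_sup[of x1 x2] by (metis add_diff_cancel_left')
  then have "t (inf x1 x2) y = t x1 y + t x2 y - t (sup x1 x2) y"
    by (simp only: ie bilinear_lsub[OF lb_bil] bilinear_ladd[OF lb_bil])
  also have "\<dots> = t x1 y + t x2 y - sup (t x1 y) (t x2 y)" using lb_supl[OF assms] by simp
  also have "\<dots> = inf (t x1 y) (t x2 y)" using add_eq_inf_sup[of "t x1 y" "t x2 y"] by (metis add_diff_cancel_left')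
  finally show ?thesis .
qed

lemma lb_infr: assumes "0 \<le> x" shows "t x (inf y1 y2) = inf (t x y1) (t x y2)"
proof -
  have ie: "inf y1 y2 = y1 + y2 - sup y1 y2" using add_eq_inf_sup[of y1 y2] by (metis add_diff_cancel_left')
  then have "t x (inf y1 y2) = t x y1 + t x y2 - t x (sup y1 y2)"
    by (simp only: ie bilinear_rsub[OF lb_bil] bilinear_radd[OF lb_bil])
  also have "\<dots> = t x y1 + t x y2 - sup (t x y1) (t x y2)" using lb_supr[OF assms] by simp
  also have "\<dots> = inf (t x y1) (t x y2)" using add_eq_inf_sup[of "t x y1" "t x y2"] by (metis add_diff_cancel_left')
  finally show ?thesis .
qed

lemma lb_monor: assumes "0 \<le> x" "y \<le> y'" shows "t x y \<le> t x y'"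
proof -
  have "0 \<le> t x (y' - y)" using assms by (intro lb_pos) simp_all
  then show ?thesis by (simp add: bilinear_rsub[OF lb_bil])
qed

lemma lb_monol: assumes "0 \<le> y" "x \<le> x'" shows "t x y \<le> t x' y"
proof -
  have "0 \<le> t (x' - x) y" using assms by (intro lb_pos) simp_all
  then show ?thesis by (simp add: bilinear_lsub[OF lb_bil])
qed

lemma lb_abs: "lat_abs (t x y) \<le> t (lat_abs x) (lat_abs y)"
proof -
  define P where "P = pprt x"
  define N where "N = - nprt x"
  define Q where "Q = pprt y"
  define M where "M = - nprt y"
  have pos: "0 \<le> P" "0 \<le> N" "0 \<le> Q" "0 \<le> M" unfolding P_def N_def Q_def M_def by simp_all
  have hx: "x = P - N" unfolding P_def N_def using prts[of x] by simp
  have hy: "y = Q - M" unfolding Q_def M_def using prts[of y] by simp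
  have ax: "lat_abs x = P + N" unfolding P_def N_def using abs_prts'[of x] by simp
  have ay: "lat_abs y = Q + M" unfolding Q_def M_def using abs_prts'[of y] by simp
  have e1: "t x y = t P Q - t P M - t N Q + t N M"
    unfolding hx hy by (simp add: bilinear_lsub[OF lb_bil] bilinear_rsub[OF lb_bil] algebra_simps)
  have e2: "t (lat_abs x) (lat_abs y) = t P Q + t P M + t N Q + t N M"
    unfolding ax ay by (simp add: bilinear_ladd[OF lb_bil] bilinear_radd[OF lb_bil] algebra_simps)
  have p: "0 \<le> t P Q" "0 \<le> t P M" "0 \<le> t N Q" "0 \<le> t N M" using pos by (simp_all add: lb_pos)
  show ?thesis
  proof (rule abs_leI')
    have "t P Q - t P M - t N Q + t N M \<le> t P Q + t P M + t N Q + t N M"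
      using p by (simp add: algebra_simps add_increasing)
    then show "t x y \<le> t (lat_abs x) (lat_abs y)" using e1 e2 by simp
    have "- (t P Q - t P M - t N Q + t N M) \<le> t P Q + t P M + t N Q + t N M"
      using p by (simp add: algebra_simps add_increasing)
    then show "- t x y \<le> t (lat_abs x) (lat_abs y)" using e1 e2 by simp
  qed
qed

lemma lb_disjl:
  assumes "lat_disjoint x x'"
  shows "lat_disjoint (t x y) (t x' y')"
proof -
  let ?w = "lat_abs y + lat_abs y'"
  have w: "0 \<le> ?w" by (simp add: abs_nonneg add_nonneg_nonneg)
  have 1: "lat_abs (t x y) \<le> t (lat_abs x) ?w"
    using lb_abs[of x y] lb_monor[of "lat_abs x" "lat_abs y" ?w]
    by (meson abs_nonneg add_increasing2 order_refl order_trans)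
  have 2: "lat_abs (t x' y') \<le> t (lat_abs x') ?w"
    using lb_abs[of x' y'] lb_monor[of "lat_abs x'" "lat_abs y'" ?w]
    by (meson abs_nonneg add_increasing order_refl order_trans)
  have "inf (t (lat_abs x) ?w) (t (lat_abs x') ?w) = t (inf (lat_abs x) (lat_abs x')) ?w"
    using lb_infl[OF w] by simp
  also have "\<dots> = 0" using assms unfolding lat_disjoint_def by (simp add: bilinear_lzero[OF lb_bil])
  finally show ?thesis by (rule disj_mono[OF 1 2])
qed

lemma lb_disjr:
  assumes "lat_disjoint y y'"
  shows "lat_disjoint (t x y) (t x' y')"
proof -
  let ?w = "lat_abs x + lat_abs x'"
  have w: "0 \<le> ?w" by (simp add: abs_nonneg add_nonneg_nonneg)
  have 1: "lat_abs (t x y) \<le> t ?w (lat_abs y)"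
    using lb_abs[of x y] lb_monol[of "lat_abs y" "lat_abs x" ?w]
    by (meson abs_nonneg add_increasing2 order_refl order_trans)
  have 2: "lat_abs (t x' y') \<le> t ?w (lat_abs y')"
    using lb_abs[of x' y'] lb_monol[of "lat_abs y'" "lat_abs x'" ?w]
    by (meson abs_nonneg add_increasing order_refl order_trans)
  have "inf (t ?w (lat_abs y)) (t ?w (lat_abs y')) = t ?w (inf (lat_abs y) (lat_abs y'))"
    using lb_infr[OF w] by simp
  also have "\<dots> = 0" using assms unfolding lat_disjoint_def by (simp add: bilinear_rzero[OF lb_bil])
  finally show ?thesis by (rule disj_mono[OF 1 2])
qed

end



lemma fpt_lb: assumes "fremlin_projective_tensor t" shows "lattice_bimorphism t"
proof -
  have "fremlin_tensor t" using assms unfolding fremlin_projective_tensor_def by (rule conjunct1)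
  then show ?thesis unfolding fremlin_tensor_def by (rule conjunct1)
qed

lemma fpt_normeq: assumes "fremlin_projective_tensor t" "u \<in> fremlin_lattice t"
  shows "norm u = proj_norm t u"
proof -
  have "\<forall>u\<in>fremlin_lattice t. norm u = proj_norm t u"
    using assms(1) unfolding fremlin_projective_tensor_def by (rule conjunct1[OF conjunct2])
  then show ?thesis using assms(2) by (rule bspec)
qed

lemma fpt_dense: assumes "fremlin_projective_tensor t"
  shows "closure (fremlin_lattice t) = UNIV"
  using assms unfolding fremlin_projective_tensor_def by (rule conjunct2[OF conjunct2])

lemma fpt_norm:
  fixes t :: "'e::banach_lattice \<Rightarrow> 'f::banach_lattice \<Rightarrow> 'g::banach_lattice"
  assumes fpt: "fremlin_projective_tensor t"
  shows "norm (t x y) \<le> norm x * norm y"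
proof -
  have lb: "lattice_bimorphism t" using fpt by (rule fpt_lb)
  have "t x y \<in> range (case_prod t)" by (metis case_prod_conv rangeI)
  then have "t x y \<in> fremlin_lattice t" unfolding fremlin_lattice_def by (rule subsetD[OF gen_sublattice_sup])
  then have eq: "norm (t x y) = proj_norm t (t x y)"
    by (rule fpt_normeq[OF fpt])
  let ?R = "{r. \<exists>n xs ys. (\<forall>i<n. 0 \<le> xs i \<and> 0 \<le> ys i) \<and>
        lat_abs (t x y) \<le> (\<Sum>i<(n::nat). t (xs i) (ys i)) \<and> r = (\<Sum>i<n. norm (xs i) * norm (ys i))}"
  have mem: "norm x * norm y \<in> ?R"
  proof -
    have "(\<forall>i<1. 0 \<le> (\<lambda>i. lat_abs x) i \<and> 0 \<le> (\<lambda>i. lat_abs y) i) \<and>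
        lat_abs (t x y) \<le> (\<Sum>i<(1::nat). t ((\<lambda>i. lat_abs x) i) ((\<lambda>i. lat_abs y) i)) \<and>
        norm x * norm y = (\<Sum>i<(1::nat). norm ((\<lambda>i. lat_abs x) i) * norm ((\<lambda>i. lat_abs y) i))"
      using lb_abs[OF lb, of x y] by (simp add: abs_nonneg norm_lat_abs)
    then show ?thesis by (intro CollectI exI[of _ 1] exI[of _ "\<lambda>i. lat_abs x"] exI[of _ "\<lambda>i. lat_abs y"])
  qed
  have "bdd_below ?R"
    by (rule bdd_belowI[of _ 0]) (auto intro!: sum_nonneg)
  then have "Inf ?R \<le> norm x * norm y" using mem by (intro cInf_lower)
  moreover have "proj_norm t (t x y) = Inf ?R" unfolding proj_norm_def by (rule refl)
  ultimately show ?thesis using eq by linarith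
qed

lemma fpt_bl_left:
  fixes t :: "'e::banach_lattice \<Rightarrow> 'f::banach_lattice \<Rightarrow> 'g::banach_lattice"
  assumes fpt: "fremlin_projective_tensor t"
  shows "bounded_linear (\<lambda>x. t x y)"
proof (rule bounded_linear_intro[where K="norm y"])
  have b: "bilinear t" using fpt_lb[OF fpt] lb_bil by blast
  show "t (x1 + x2) y = t x1 y + t x2 y" for x1 x2 by (rule bilinear_ladd[OF b])
  show "t (r *\<^sub>R x) y = r *\<^sub>R t x y" for r x by (rule bilinear_lmul[OF b])
  show "norm (t x y) \<le> norm x * norm y" for x by (rule fpt_norm[OF fpt])
qed

lemma fpt_bl_right:
  fixes t :: "'e::banach_lattice \<Rightarrow> 'f::banach_lattice \<Rightarrow> 'g::banach_lattice"
  assumes fpt: "fremlin_projective_tensor t"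
  shows "bounded_linear (t x)"
proof (rule bounded_linear_intro[where K="norm x"])
  have b: "bilinear t" using fpt_lb[OF fpt] lb_bil by blast
  show "t x (y1 + y2) = t x y1 + t x y2" for y1 y2 by (rule bilinear_radd[OF b])
  show "t x (r *\<^sub>R y) = r *\<^sub>R t x y" for r y by (rule bilinear_rmul[OF b])
  show "norm (t x y) \<le> norm y * norm x" for y using fpt_norm[OF fpt, of x y] by (simp add: mult.commute)
qed



lemma pb_tensor:
  fixes t :: "'e::banach_lattice \<Rightarrow> 'f::banach_lattice \<Rightarrow> 'g::banach_lattice"
    and B :: "'e set" and C :: "'f set"
  assumes lb: "lattice_bimorphism t"
    and dense: "closure (fremlin_lattice t) = UNIV"
    and dB: "\<And>x. \<exists>b\<in>B. \<exists>c\<in>disjoint_complement B. x = b + c"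
    and dC: "\<And>y. \<exists>b\<in>C. \<exists>c\<in>disjoint_complement C. y = b + c"
  shows "projection_band (proj_tensor_sub t B C)"
proof -
  define T where "T = case_prod t ` (B \<times> C)"
  define A where "A = proj_tensor_sub t B C"
  have A_def': "A = closure (gen_sublattice T)" unfolding A_def T_def proj_tensor_sub_def ..
  define DA where "DA = disjoint_complement A"
  have slA: "sublat A" unfolding A_def' by (intro closure_sublat gen_sublattice_sublat)
  have ssA: "subspace A" using slA sublat_def by blast
  have clA: "closed A" unfolding A_def' by simp
  have slD: "sublat DA" unfolding DA_def by (rule dc_sublat)
  have ssD: "subspace DA" unfolding DA_def by (rule dc_subspace)
  have clD: "closed DA" unfolding DA_def by (rule dc_closed)
  have TA: "T \<subseteq> A" unfolding A_def' using gen_sublattice_sup closure_subset by (rule order_trans)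
  have disjAD: "lat_disjoint a d" if "a \<in> A" "d \<in> DA" for a d
  proof -
    have "lat_disjoint d a" using that unfolding DA_def dc_iff by blast
    then show ?thesis by (metis lat_disjoint_sym)
  qed
  define S where "S = {a + d | a d. a \<in> A \<and> d \<in> DA}"
  have S_iff: "z \<in> S \<longleftrightarrow> (\<exists>a\<in>A. z - a \<in> DA)" for z
  proof
    assume "z \<in> S"
    then obtain a d where "a \<in> A" "d \<in> DA" "z = a + d" unfolding S_def by blast
    then show "\<exists>a\<in>A. z - a \<in> DA" by (intro bexI[of _ a]) simp_all
  next
    assume "\<exists>a\<in>A. z - a \<in> DA"
    then obtain a where a: "a \<in> A" "z - a \<in> DA" by blast
    have "z = a + (z - a)" by simp
    then show "z \<in> S" unfolding S_def using a by blast
  qed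
  have rangeS: "range (case_prod t) \<subseteq> S"
  proof
    fix z assume "z \<in> range (case_prod t)"
    then obtain x y where z: "z = t x y" by auto
    obtain x1 x2 where x: "x1 \<in> B" "x2 \<in> disjoint_complement B" "x = x1 + x2" using dB by blast
    obtain y1 y2 where y: "y1 \<in> C" "y2 \<in> disjoint_complement C" "y = y1 + y2" using dC by blast
    have b: "bilinear t" by (rule lb_bil[OF lb])
    have e: "t x y = t x1 y1 + (t x1 y2 + t x2 y1 + t x2 y2)"
      unfolding x(3) y(3) by (simp add: bilinear_ladd[OF b] bilinear_radd[OF b] algebra_simps)
    have a: "t x1 y1 \<in> A" using TA x y unfolding T_def by auto
    have d1: "t x1 y2 \<in> disjoint_complement T"
      unfolding dc_iff T_def
    proof
      fix s assume "s \<in> case_prod t ` (B \<times> C)"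
      then obtain b c where bc: "b \<in> B" "c \<in> C" "s = t b c" by auto
      have "lat_disjoint y2 c" using y(2) bc(2) unfolding dc_iff by blast
      then show "lat_disjoint (t x1 y2) s" unfolding bc(3) by (rule lb_disjr[OF lb])
    qed
    have d2: "t x2 y1 \<in> disjoint_complement T"
      unfolding dc_iff T_def
    proof
      fix s assume "s \<in> case_prod t ` (B \<times> C)"
      then obtain b c where bc: "b \<in> B" "c \<in> C" "s = t b c" by auto
      have "lat_disjoint x2 b" using x(2) bc(1) unfolding dc_iff by blast
      then show "lat_disjoint (t x2 y1) s" unfolding bc(3) by (rule lb_disjl[OF lb])
    qed
    have d3: "t x2 y2 \<in> disjoint_complement T"
      unfolding dc_iff T_def
    proof
      fix s assume "s \<in> case_prod t ` (B \<times> C)"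
      then obtain b c where bc: "b \<in> B" "c \<in> C" "s = t b c" by auto
      have "lat_disjoint x2 b" using x(2) bc(1) unfolding dc_iff by blast
      then show "lat_disjoint (t x2 y2) s" unfolding bc(3) by (rule lb_disjl[OF lb])
    qed
    have "t x1 y2 + t x2 y1 + t x2 y2 \<in> DA"
      unfolding DA_def A_def' using d1 d2 d3 by (intro dc_add dc_of_closure_gen)
    then show "z \<in> S" unfolding S_def z e using a by blast
  qed
  have pS: "pprt z \<in> S" if zS: "z \<in> S" for z
  proof -
    obtain a d where ad: "a \<in> A" "d \<in> DA" "z = a + d" using zS unfolding S_def by blast
    have "pprt z = pprt a + pprt d" unfolding ad(3) by (rule disj_pprt[OF disjAD[OF ad(1,2)]])
    moreover have "pprt a \<in> A" unfolding pprt_def using slA ad(1) ssA subspace_0 unfolding sublat_def by blast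
    moreover have "pprt d \<in> DA" unfolding pprt_def using slD ad(2) ssD subspace_0 unfolding sublat_def by blast
    ultimately show ?thesis unfolding S_def by blast
  qed
  have ssS: "subspace S" unfolding S_def by (rule subspace_sums[OF ssA ssD])
  have slS: "sublat S" unfolding sublat_def
  proof (intro conjI ssS ballI)
    fix u v assume uv: "u \<in> S" "v \<in> S"
    have "v - u \<in> S" using uv ssS subspace_diff by blast
    then have "u + pprt (v - u) \<in> S" using uv(1) pS ssS subspace_add by blast
    moreover have "u + pprt (v - u) = sup u v"
      unfolding pprt_def add_sup_distrib_left by (simp add: sup_commute)
    ultimately show "sup u v \<in> S" by simp
  qed
  have clS: "closed S"
    unfolding closed_sequential_limits
  proof (intro allI impI, elim conjE)
    fix u l assume u: "\<forall>n. u n \<in> S" and lim: "u \<longlonglongrightarrow> l"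
    have "\<forall>n. \<exists>a. a \<in> A \<and> u n - a \<in> DA" using u by (simp add: S_iff Bex_def)
    from choice[OF this] obtain a where a0: "\<forall>n. a n \<in> A \<and> u n - a n \<in> DA" by blast
    have a: "\<And>n. a n \<in> A" "\<And>n. u n - a n \<in> DA" using a0 by simp_all
    have bound: "norm (a n - a m) \<le> norm (u n - u m)" for n m
    proof -
      have 1: "a n - a m \<in> A" by (intro subspace_diff[OF ssA] a)
      have 2: "(u n - a n) - (u m - a m) \<in> DA" by (intro subspace_diff[OF ssD] a)
      have "u n - u m = (a n - a m) + ((u n - a n) - (u m - a m))" by simp
      then have "lat_abs (u n - u m) = lat_abs (a n - a m) + lat_abs ((u n - a n) - (u m - a m))"
        using disj_abs[OF disjAD[OF 1 2]] by simp
      then have "lat_abs (a n - a m) \<le> lat_abs (u n - u m)" by (simp add: abs_nonneg)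
      then show ?thesis by (rule norm_abs_mono)
    qed
    have cu: "Cauchy u" using lim by (rule LIMSEQ_imp_Cauchy)
    have "Cauchy a" unfolding Cauchy_def
    proof (intro allI impI)
      fix e :: real assume "0 < e"
      then obtain M where M: "\<forall>m\<ge>M. \<forall>n\<ge>M. dist (u m) (u n) < e" using cu unfolding Cauchy_def by blast
      show "\<exists>M. \<forall>m\<ge>M. \<forall>n\<ge>M. dist (a m) (a n) < e"
      proof (intro exI[of _ M] allI impI)
        fix m n assume "M \<le> m" "M \<le> n"
        then have "dist (u m) (u n) < e" using M by simp
        then show "dist (a m) (a n) < e" using bound[of m n] unfolding dist_norm by linarith
      qed
    qed
    then have "convergent a" by (simp add: Cauchy_convergent_iff)
    then obtain \<alpha> where al: "a \<longlonglongrightarrow> \<alpha>" unfolding convergent_def by (elim exE)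
    have aA: "\<alpha> \<in> A" by (rule closed_sequentially[OF clA a(1) al])
    have "(\<lambda>n. u n - a n) \<longlonglongrightarrow> l - \<alpha>" using lim al by (rule tendsto_diff)
    then have "l - \<alpha> \<in> DA" by (rule closed_sequentially[OF clD a(2)])
    then show "l \<in> S" unfolding S_iff using aA by (intro bexI[of _ \<alpha>])
  qed
  have "fremlin_lattice t \<subseteq> S" unfolding fremlin_lattice_def by (rule gen_sublattice_least[OF slS rangeS])
  then have "closure (fremlin_lattice t) \<subseteq> S" using clS by (rule closure_minimal)
  then have SU: "S = UNIV" using dense by blast
  have decomp: "\<exists>a\<in>A. \<exists>d\<in>DA. z = a + d" for z
  proof -
    have "z \<in> S" using SU by simp
    then obtain a d where "a \<in> A" "d \<in> DA" "z = a + d" unfolding S_def by blast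
    then show ?thesis by blast
  qed
  have solid: "y \<in> A" if xy: "x \<in> A" "lat_abs y \<le> lat_abs x" for x y
  proof -
    obtain a d where ad: "a \<in> A" "d \<in> DA" "y = a + d" using decomp by blast
    have "lat_abs y = lat_abs a + lat_abs d" unfolding ad(3) by (rule disj_abs[OF disjAD[OF ad(1,2)]])
    then have "lat_abs d \<le> lat_abs y" by (simp add: abs_nonneg)
    then have dx: "lat_abs d \<le> lat_abs x" using xy(2) by (rule order_trans)
    have "lat_disjoint d x" using ad(2) xy(1) unfolding DA_def dc_iff by blast
    then have "inf (lat_abs d) (lat_abs x) = 0" unfolding lat_disjoint_def .
    moreover have "inf (lat_abs d) (lat_abs x) = lat_abs d" using dx by (rule inf_absorb1)
    ultimately have "d = 0" using abs_zero_iff by metis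
    then show ?thesis using ad by simp
  qed
  have supA: "s \<in> A" if Ds: "D \<subseteq> A" "is_sup_in UNIV D s" for D s
  proof (cases "D = {}")
    case True
    with Ds(2) have "\<forall>u. s \<le> u" unfolding is_sup_in_def by simp
    then have "s \<le> s - lat_abs s" by blast
    then have "lat_abs s \<le> 0" by simp
    then have "lat_abs s = 0" using abs_nonneg[of s] by (rule antisym)
    then have "s = 0" using abs_zero_iff by blast
    then show ?thesis using ssA subspace_0 by blast
  next
    case False
    then obtain x0 where x0: "x0 \<in> D" by blast
    obtain a d where ad: "a \<in> A" "d \<in> DA" "s = a + d" using decomp by blast
    have key: "x \<le> a \<and> 0 \<le> d" if x: "x \<in> D" for x
    proof -
      have "x \<le> s" using Ds(2) x unfolding is_sup_in_def by blast
      then have "0 \<le> (a - x) + d" using ad(3) by (simp add: algebra_simps)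
      moreover have "a - x \<in> A" using ad(1) x Ds(1) ssA subspace_diff by blast
      ultimately have "0 \<le> a - x" "0 \<le> d" using disj_pos disjAD ad(2) by blast+
      then show ?thesis by simp
    qed
    have "s \<le> a" using Ds(2) key unfolding is_sup_in_def by blast
    then have "d \<le> 0" using ad(3) by simp
    moreover have "0 \<le> d" using key x0 by blast
    ultimately have "d = 0" by simp
    then show ?thesis using ad by simp
  qed
  have "projection_band A"
    unfolding projection_band_def band_def lat_ideal_def
  proof (intro conjI ssA allI ballI impI)
    show "y \<in> A" if "x \<in> A" "lat_abs y \<le> lat_abs x" for x y using solid that by blast
    show "s \<in> A" if "D \<subseteq> A \<and> is_sup_in UNIV D s" for D s using supA that by blast
    show "\<exists>b\<in>A. \<exists>c\<in>disjoint_complement A. x = b + c" for x using decomp unfolding DA_def by blast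
  qed
  then show ?thesis unfolding A_def .
qed



lemma tens_disj:
  fixes t :: "'e::banach_lattice \<Rightarrow> 'f::banach_lattice \<Rightarrow> 'g::banach_lattice"
  assumes lb: "lattice_bimorphism t"
    and h: "(\<forall>x\<in>B1. \<forall>x'\<in>B2. lat_disjoint x x') \<or> (\<forall>y\<in>C1. \<forall>y'\<in>C2. lat_disjoint y y')"
    and u: "u \<in> proj_tensor_sub t B1 C1" and v: "v \<in> proj_tensor_sub t B2 C2"
  shows "lat_disjoint u v"
proof -
  define T1 where "T1 = case_prod t ` (B1 \<times> C1)"
  define T2 where "T2 = case_prod t ` (B2 \<times> C2)"
  have "T1 \<subseteq> disjoint_complement T2"
  proof
    fix z assume "z \<in> T1"
    then obtain x y where xy: "x \<in> B1" "y \<in> C1" "z = t x y" unfolding T1_def by auto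
    show "z \<in> disjoint_complement T2" unfolding dc_iff
    proof
      fix s assume "s \<in> T2"
      then obtain x' y' where xy': "x' \<in> B2" "y' \<in> C2" "s = t x' y'" unfolding T2_def by auto
      show "lat_disjoint z s"
        using h
      proof
        assume "\<forall>x\<in>B1. \<forall>x'\<in>B2. lat_disjoint x x'"
        then have "lat_disjoint x x'" using xy xy' by blast
        then show ?thesis unfolding xy(3) xy'(3) by (rule lb_disjl[OF lb])
      next
        assume "\<forall>y\<in>C1. \<forall>y'\<in>C2. lat_disjoint y y'"
        then have "lat_disjoint y y'" using xy xy' by blast
        then show ?thesis unfolding xy(3) xy'(3) by (rule lb_disjr[OF lb])
      qed
    qed
  qed
  then have "closure (gen_sublattice T1) \<subseteq> disjoint_complement T2" by (rule dc_closure_gen)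
  then have "u \<in> disjoint_complement T2" using u unfolding proj_tensor_sub_def T1_def by blast
  then have "u \<in> disjoint_complement (closure (gen_sublattice T2))" by (rule dc_of_closure_gen)
  then show ?thesis using v unfolding proj_tensor_sub_def T2_def dc_iff by blast
qed

lemma pprt_sum_disj:
  fixes A :: "'k \<Rightarrow> 'a::banach_lattice set"
  assumes dis: "\<forall>k\<in>K. \<forall>k'\<in>K. k \<noteq> k' \<longrightarrow> (\<forall>x\<in>A k. \<forall>y\<in>A k'. lat_disjoint x y)"
  shows "finite F \<Longrightarrow> F \<subseteq> K \<Longrightarrow> (\<forall>k\<in>F. u k \<in> A k) \<Longrightarrow> pprt (sum u F) = sum (\<lambda>k. pprt (u k)) F"
proof (induction F rule: finite_induct)
  case empty
  then show ?case by simp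
next
  case (insert k0 F)
  have "sum u F \<in> disjoint_complement {u k0}"
  proof (rule subspace_sum[OF dc_subspace])
    fix k assume k: "k \<in> F"
    then have "k \<noteq> k0" using insert.hyps by blast
    moreover have "k \<in> K" "k0 \<in> K" using k insert.prems by blast+
    moreover have "u k \<in> A k" "u k0 \<in> A k0" using k insert.prems by blast+
    ultimately have "lat_disjoint (u k) (u k0)" using dis by blast
    then show "u k \<in> disjoint_complement {u k0}" unfolding dc_iff by blast
  qed
  then have "lat_disjoint (sum u F) (u k0)" unfolding dc_iff by blast
  then have d: "lat_disjoint (u k0) (sum u F)" by (metis lat_disjoint_sym)
  have "pprt (sum u (insert k0 F)) = pprt (u k0 + sum u F)" using insert.hyps by simp
  also have "\<dots> = pprt (u k0) + pprt (sum u F)" by (rule disj_pprt[OF d])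
  also have "\<dots> = pprt (u k0) + sum (\<lambda>k. pprt (u k)) F" using insert by simp
  also have "\<dots> = sum (\<lambda>k. pprt (u k)) (insert k0 F)" using insert.hyps by simp
  finally show ?case .
qed

lemma span_disj_sublat:
  fixes A :: "'k \<Rightarrow> 'a::banach_lattice set"
  assumes sl: "\<forall>k\<in>K. sublat (A k)"
    and dis: "\<forall>k\<in>K. \<forall>k'\<in>K. k \<noteq> k' \<longrightarrow> (\<forall>x\<in>A k. \<forall>y\<in>A k'. lat_disjoint x y)"
  shows "sublat (span (\<Union>k\<in>K. A k))"
proof -
  let ?U = "\<Union>k\<in>K. A k"
  have ss: "subspace (A k)" if "k \<in> K" for k using sl that unfolding sublat_def by blast
  define W where "W = {sum u F | F u. finite F \<and> F \<subseteq> K \<and> (\<forall>k\<in>F. u k \<in> A k)}"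
  have ssW: "subspace W" unfolding subspace_def
  proof (intro conjI ballI allI)
    show "0 \<in> W" unfolding W_def by (rule CollectI, rule exI[of _ "{}"]) auto
  next
    fix x y assume "x \<in> W" "y \<in> W"
    then obtain F u G v where x: "x = sum u F" "finite F" "F \<subseteq> K" "\<forall>k\<in>F. u k \<in> A k"
      and y: "y = sum v G" "finite G" "G \<subseteq> K" "\<forall>k\<in>G. v k \<in> A k"
      unfolding W_def by blast
    define w where "w = (\<lambda>k. (if k \<in> F then u k else 0) + (if k \<in> G then v k else 0))"
    have fin: "finite (F \<union> G)" using x y by simp
    have "sum w (F \<union> G) = sum (\<lambda>k. if k \<in> F then u k else 0) (F \<union> G) + sum (\<lambda>k. if k \<in> G then v k else 0) (F \<union> G)"
      unfolding w_def by (rule sum.distrib)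
    also have "sum (\<lambda>k. if k \<in> F then u k else 0) (F \<union> G) = sum u ((F \<union> G) \<inter> F)"
      using sum.inter_restrict[OF fin, of u F] by simp
    also have "sum (\<lambda>k. if k \<in> G then v k else 0) (F \<union> G) = sum v ((F \<union> G) \<inter> G)"
      using sum.inter_restrict[OF fin, of v G] by simp
    finally have "sum w (F \<union> G) = x + y" using x y by (simp add: Int_absorb1)
    moreover have "\<forall>k\<in>F \<union> G. w k \<in> A k"
    proof
      fix k assume k: "k \<in> F \<union> G"
      then have kK: "k \<in> K" using x y by blast
      have "(if k \<in> F then u k else 0) \<in> A k" using x(4) ss[OF kK] subspace_0 by auto
      moreover have "(if k \<in> G then v k else 0) \<in> A k" using y(4) ss[OF kK] subspace_0 by auto
      ultimately show "w k \<in> A k" unfolding w_def using ss[OF kK] subspace_add by blast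
    qed
    moreover have "F \<union> G \<subseteq> K" using x y by blast
    ultimately have xyW: "x + y = sum w (F \<union> G) \<and> finite (F \<union> G) \<and> F \<union> G \<subseteq> K \<and> (\<forall>k\<in>F \<union> G. w k \<in> A k)"
      using fin by simp
    show "x + y \<in> W" unfolding W_def by (rule CollectI, rule exI[of _ "F \<union> G"], rule exI[of _ w], rule xyW)
  next
    fix c x assume "x \<in> W"
    then obtain F u where x: "x = sum u F" "finite F" "F \<subseteq> K" "\<forall>k\<in>F. u k \<in> A k"
      unfolding W_def by blast
    have "c *\<^sub>R x = sum (\<lambda>k. c *\<^sub>R u k) F" unfolding x(1) by (rule scaleR_sum_right)
    moreover have "\<forall>k\<in>F. c *\<^sub>R u k \<in> A k" using x ss subspace_scale by blast
    ultimately show "c *\<^sub>R x \<in> W" unfolding W_def using x(2,3) by blast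
  qed
  have UW: "?U \<subseteq> W"
  proof
    fix x assume "x \<in> ?U"
    then obtain k where k: "k \<in> K" "x \<in> A k" by blast
    have "x = sum (\<lambda>_. x) {k}" by simp
    then show "x \<in> W" unfolding W_def using k by blast
  qed
  have spW: "span ?U \<subseteq> W" by (rule span_minimal[OF UW ssW])
  have pS: "pprt v \<in> span ?U" if v: "v \<in> span ?U" for v
  proof -
    have "v \<in> W" using v spW by (rule subsetD[rotated])
    then obtain F u where x: "v = sum u F" "finite F" "F \<subseteq> K" "\<forall>k\<in>F. u k \<in> A k"
      unfolding W_def by blast
    have eqv: "pprt v = sum (\<lambda>k. pprt (u k)) F" unfolding x(1) using pprt_sum_disj[OF dis x(2,3,4)] .
    have "sum (\<lambda>k. pprt (u k)) F \<in> span ?U"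
    proof (rule subspace_sum[OF subspace_span])
      fix k assume k: "k \<in> F"
      then have kK: "k \<in> K" using x by blast
      have uk: "u k \<in> A k" using x(4) k by blast
      have z: "0 \<in> A k" using ss[OF kK] by (rule subspace_0)
      have "\<forall>a\<in>A k. \<forall>b\<in>A k. sup a b \<in> A k" using sl kK unfolding sublat_def by blast
      then have "pprt (u k) \<in> A k" unfolding pprt_def using uk z by blast
      then have "pprt (u k) \<in> ?U" using kK by (rule UN_I[rotated])
      then show "pprt (u k) \<in> span ?U" by (rule span_base)
    qed
    then show ?thesis unfolding eqv .
  qed
  show ?thesis unfolding sublat_def
  proof (intro conjI subspace_span ballI)
    fix a b assume ab: "a \<in> span ?U" "b \<in> span ?U"
    have "b - a \<in> span ?U" by (rule span_diff[OF ab(2) ab(1)])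
    then have "pprt (b - a) \<in> span ?U" by (rule pS)
    then have "a + pprt (b - a) \<in> span ?U" by (rule span_add[OF ab(1)])
    moreover have "a + pprt (b - a) = sup a b"
      unfolding pprt_def add_sup_distrib_left by (simp add: sup_commute)
    ultimately show "sup a b \<in> span ?U" by simp
  qed
qed



theorem lemma3p10:
  fixes t :: "'e::banach_lattice \<Rightarrow> 'f::banach_lattice \<Rightarrow> 'g::banach_lattice"
    and B :: "'i \<Rightarrow> 'e set" and I :: "'i set"
    and C :: "'j \<Rightarrow> 'f set" and J :: "'j set"
  assumes "fremlin_projective_tensor t"
    and "order_complete_on (fremlin_lattice t)"
    and "dense_band_decomposition B I"
    and "dense_band_decomposition C J"
  shows "dense_band_decomposition (\<lambda>(a, b). proj_tensor_sub t (B a) (C b)) (I \<times> J)"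
proof -
  have fpt: "fremlin_projective_tensor t" by (rule assms(1))
  have lb: "lattice_bimorphism t" using assms(1) by (rule fpt_lb)
  have dense: "closure (fremlin_lattice t) = UNIV" using assms(1) by (rule fpt_dense)
  have B1: "\<forall>a\<in>I. projection_band (B a)"
    using assms(3) unfolding dense_band_decomposition_def by (rule conjunct1)
  have B2: "\<forall>a\<in>I. \<forall>b\<in>I. a \<noteq> b \<longrightarrow> (\<forall>x\<in>B a. \<forall>y\<in>B b. lat_disjoint x y)"
    using assms(3) unfolding dense_band_decomposition_def by (rule conjunct1[OF conjunct2])
  have denB: "closure (span (\<Union>a\<in>I. B a)) = UNIV"
    using assms(3) unfolding dense_band_decomposition_def by (rule conjunct2[OF conjunct2])
  have C1: "\<forall>a\<in>J. projection_band (C a)"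
    using assms(4) unfolding dense_band_decomposition_def by (rule conjunct1)
  have C2: "\<forall>a\<in>J. \<forall>b\<in>J. a \<noteq> b \<longrightarrow> (\<forall>x\<in>C a. \<forall>y\<in>C b. lat_disjoint x y)"
    using assms(4) unfolding dense_band_decomposition_def by (rule conjunct1[OF conjunct2])
  have denC: "closure (span (\<Union>a\<in>J. C a)) = UNIV"
    using assms(4) unfolding dense_band_decomposition_def by (rule conjunct2[OF conjunct2])
  have pbB: "projection_band (B a)" if "a \<in> I" for a using B1 that by blast
  have pbC: "projection_band (C b)" if "b \<in> J" for b using C1 that by blast
  have disB: "\<forall>x\<in>B a. \<forall>y\<in>B a'. lat_disjoint x y" if "a \<in> I" "a' \<in> I" "a \<noteq> a'" for a a'
    using B2 that by blast
  have disC: "\<forall>x\<in>C b. \<forall>y\<in>C b'. lat_disjoint x y" if "b \<in> J" "b' \<in> J" "b \<noteq> b'" for b b'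
    using C2 that by blast
  define A where "A = (\<lambda>(a, b). proj_tensor_sub t (B a) (C b))"
  have Aab: "A (a, b) = proj_tensor_sub t (B a) (C b)" for a b by (simp add: A_def)
  have P1: "\<forall>k\<in>I \<times> J. projection_band (A k)"
  proof
    fix k assume "k \<in> I \<times> J"
    then obtain a b where k: "k = (a, b)" "a \<in> I" "b \<in> J" by blast
    have dB: "\<exists>b\<in>B a. \<exists>c\<in>disjoint_complement (B a). x = b + c" for x
      using pbB[OF k(2)] unfolding projection_band_def by blast
    have dC: "\<exists>b'\<in>C b. \<exists>c\<in>disjoint_complement (C b). y = b' + c" for y
      using pbC[OF k(3)] unfolding projection_band_def by blast
    show "projection_band (A k)" unfolding k(1) Aab by (rule pb_tensor[OF lb dense dB dC])
  qed
  have P2: "\<forall>k\<in>I \<times> J. \<forall>k'\<in>I \<times> J. k \<noteq> k' \<longrightarrow> (\<forall>x\<in>A k. \<forall>y\<in>A k'. lat_disjoint x y)"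
  proof (intro ballI impI)
    fix k k' x y assume kk: "k \<in> I \<times> J" "k' \<in> I \<times> J" "k \<noteq> k'" and xy: "x \<in> A k" "y \<in> A k'"
    obtain a b where k: "k = (a, b)" "a \<in> I" "b \<in> J" using kk(1) by blast
    obtain a' b' where k': "k' = (a', b')" "a' \<in> I" "b' \<in> J" using kk(2) by blast
    have "a \<noteq> a' \<or> b \<noteq> b'" using kk(3) k k' by blast
    then have h: "(\<forall>x\<in>B a. \<forall>x'\<in>B a'. lat_disjoint x x') \<or> (\<forall>y\<in>C b. \<forall>y'\<in>C b'. lat_disjoint y y')"
      using disB[OF k(2) k'(2)] disC[OF k(3) k'(3)] by blast
    show "lat_disjoint x y"
      by (rule tens_disj[OF lb h]) (use xy k k' Aab in simp_all)
  qed
  let ?U = "\<Union>k\<in>I \<times> J. A k"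
  define M where "M = closure (span ?U)"
  have slA: "\<forall>k\<in>I \<times> J. sublat (A k)"
  proof
    fix k assume "k \<in> I \<times> J"
    then obtain a b where k: "k = (a, b)" by blast
    show "sublat (A k)" unfolding k Aab proj_tensor_sub_def by (intro closure_sublat gen_sublattice_sublat)
  qed
  have slM: "sublat M" unfolding M_def by (intro closure_sublat span_disj_sublat[OF slA P2])
  have ssM: "subspace M" using slM unfolding sublat_def by blast
  have clM: "closed M" unfolding M_def by simp
  have spM: "span ?U \<subseteq> M" unfolding M_def by (rule closure_subset)
  have t1: "t b y \<in> M" if ab: "a \<in> I" "b \<in> B a" for a b y
  proof -
    have bl: "bounded_linear (t b)" by (rule fpt_bl_right[OF fpt])
    let ?X = "\<Union>c\<in>J. C c"
    have "t b ` ?X \<subseteq> ?U"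
    proof
      fix z assume "z \<in> t b ` ?X"
      then obtain \<beta> c where c: "\<beta> \<in> J" "c \<in> C \<beta>" "z = t b c" by blast
      have "z \<in> case_prod t ` (B a \<times> C \<beta>)" unfolding c(3)
        by (rule image_eqI[where x="(b, c)"]) (simp_all add: ab c)
      moreover have "case_prod t ` (B a \<times> C \<beta>) \<subseteq> closure (gen_sublattice (case_prod t ` (B a \<times> C \<beta>)))"
        by (rule order_trans[OF gen_sublattice_sup closure_subset])
      ultimately have "z \<in> A (a, \<beta>)" unfolding Aab proj_tensor_sub_def by (rule subsetD[rotated])
      then show "z \<in> ?U" by (rule UN_I[where a="(a, \<beta>)", rotated]) (simp add: ab c)
    qed
    then have "span (t b ` ?X) \<subseteq> M" by (rule order_trans[OF span_mono spM])
    then have "t b ` span ?X \<subseteq> M" using span_linear_image[OF bounded_linear.linear[OF bl]] by simp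
    then have "t b ` closure (span ?X) \<subseteq> M"
      by (intro image_closure_subset[OF linear_continuous_on[OF bl] clM])
    moreover have "y \<in> closure (span ?X)" using denC by simp
    ultimately show ?thesis by (meson image_eqI subsetD)
  qed
  have t2: "t x y \<in> M" for x y
  proof -
    have bl: "bounded_linear (\<lambda>x. t x y)" by (rule fpt_bl_left[OF fpt])
    let ?X = "\<Union>a\<in>I. B a"
    have "(\<lambda>x. t x y) ` ?X \<subseteq> M"
    proof
      fix z assume "z \<in> (\<lambda>x. t x y) ` ?X"
      then obtain a b where "a \<in> I" "b \<in> B a" "z = t b y" by blast
      then show "z \<in> M" using t1 by simp
    qed
    then have "span ((\<lambda>x. t x y) ` ?X) \<subseteq> M" by (rule span_minimal[OF _ ssM])
    then have "(\<lambda>x. t x y) ` span ?X \<subseteq> M" using span_linear_image[OF bounded_linear.linear[OF bl]] by simp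
    then have "(\<lambda>x. t x y) ` closure (span ?X) \<subseteq> M"
      by (intro image_closure_subset[OF linear_continuous_on[OF bl] clM])
    moreover have "x \<in> closure (span ?X)" using denB by simp
    ultimately show ?thesis by (meson image_eqI subsetD)
  qed
  have "range (case_prod t) \<subseteq> M" using t2 by (auto simp: image_iff)
  then have "fremlin_lattice t \<subseteq> M" unfolding fremlin_lattice_def by (rule gen_sublattice_least[OF slM])
  then have "closure (fremlin_lattice t) \<subseteq> M" using clM by (rule closure_minimal)
  then have P3: "closure (span ?U) = UNIV" using dense unfolding M_def by (simp add: top.extremum_unique)
  show ?thesis unfolding dense_band_decomposition_def A_def[symmetric]
    by (intro conjI P1 P2 P3)
qed


end
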